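(* Let $y=\gamma+i\tau$ with $\tau\in\mathbb{R}$ and $\gamma>-1/2$. For every compact set $K\subset\mathbb{C}$ there is a constant $C_K>0$ such that for all $a\in K$, $n\in\mathbb{N}$ and $m\in\{0,1,\dots,n\}$, \[ \bigl|{}_2F_1(-m,1+y;2\gamma+1;1-e^{ia/n})\bigr|\le {}_2F_1(-n,1+|y|;2\gamma+1;-C_K/n). \]
   Context: ${}_2F_1(\alpha,\beta;c;z)=\sum_{k\ge0}\frac{(\alpha)_k(\beta)_k}{(c)_k}\frac{z^k}{k!}$ is the Gauss hypergeometric function, where $(v)_0=1$, $(v)_k=v(v+1)\cdots(v+k-1)$; when $\alpha=-m$ is a nonpositive integer it is the polynomial $\sum_{k=0}^m\binom{m}{k}\frac{(\beta)_k}{(c)_k}(-z)^k$. *)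

theory Defs
  imports "HOL-Analysis.Analysis"
begin

text \<open>Gauss hypergeometric function 2F1(-m, b; c; z) with nonpositive integer
  first parameter -m, i.e. the terminating polynomial
  sum_{k=0}^m (m choose k) (b)_k / (c)_k (-z)^k.\<close>
definition hyp2F1_neg :: "nat \<Rightarrow> 'a::field \<Rightarrow> 'a \<Rightarrow> 'a \<Rightarrow> 'a" where
  "hyp2F1_neg m b c z =
     (\<Sum>k\<le>m. of_nat (m choose k) * pochhammer b k / pochhammer c k * (- z) ^ k)"

end

theory Submission
  imports Defs
begin

lemma norm_poch_le:
  fixes b :: complex
  shows "cmod (pochhammer (1 + b) k) \<le> pochhammer (1 + cmod b) k"
proof -
  have "cmod (pochhammer (1 + b) k) = (\<Prod>i\<in>{0..<k}. cmod (1 + b + of_nat i))"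
    by (simp add: pochhammer_prod prod_norm)
  also have "\<dots> \<le> (\<Prod>i\<in>{0..<k}. 1 + cmod b + of_nat i)"
  proof (rule prod_mono, safe)
    fix i
    show "0 \<le> cmod (1 + b + of_nat i)" by simp
    have "cmod (1 + b + of_nat i) = cmod (b + of_nat (Suc i))" by (simp add: add_ac)
    also have "\<dots> \<le> cmod b + cmod (of_nat (Suc i) :: complex)" by (rule norm_triangle_ineq)
    also have "\<dots> = 1 + cmod b + of_nat i" using norm_of_nat[of "Suc i", where 'a=complex] by simp
    finally show "cmod (1 + b + of_nat i) \<le> 1 + cmod b + of_nat i" .
  qed
  also have "\<dots> = pochhammer (1 + cmod b) k" by (simp add: pochhammer_prod)
  finally show ?thesis .
qed

lemma norm_exp_sub1: "cmod (exp z - 1) \<le> exp (cmod z) * cmod z"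
  using Taylor_exp_field[of z 0] by simp

theorem lemma2p2:
  fixes \<gamma> \<tau> :: real and K :: "complex set"
  assumes "\<gamma> > - 1 / 2" and "compact K"
  shows "\<exists>C>0. \<forall>a\<in>K. \<forall>n::nat. n \<ge> 1 \<longrightarrow> (\<forall>m\<le>n.
           cmod (hyp2F1_neg m (1 + Complex \<gamma> \<tau>) (complex_of_real (2 * \<gamma> + 1))
                   (1 - exp (\<i> * a / of_nat n)))
           \<le> hyp2F1_neg n (1 + cmod (Complex \<gamma> \<tau>)) (2 * \<gamma> + 1) (- C / real n))"
proof -
  obtain R where R: "\<forall>x\<in>K. cmod x \<le> R"
    using compact_imp_bounded[OF assms(2)] bounded_iff by blast
  define B where "B = max R 0"
  define C where "C = B * exp B + 1"
  have B0: "B \<ge> 0" by (simp add: B_def)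
  have C0: "C > 0" unfolding C_def using B0 by (simp add: add_nonneg_pos)
  define y where "y = Complex \<gamma> \<tau>"
  define c where "c = 2 * \<gamma> + 1"
  have c0: "c > 0" using assms(1) by (simp add: c_def)
  have pc: "\<And>k. pochhammer c k > 0" using c0 by (rule pochhammer_pos)
  have py: "\<And>k. pochhammer (1 + cmod y) k \<ge> 0" by (rule pochhammer_nonneg) (simp add: add_pos_nonneg)
  show ?thesis
  proof (intro exI[of _ C] conjI C0 ballI allI impI)
    fix a n m assume a: "a \<in> K" and n: "(1::nat) \<le> n" and mn: "m \<le> n"
    define z where "z = \<i> * a / of_nat n"
    have nz: "cmod z = cmod a / real n" by (simp add: z_def norm_divide norm_mult)
    have aB: "cmod a \<le> B" using R a B_def by force
    have zB: "cmod z \<le> B" unfolding nz using aB n B0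
      proof -
      have "real n \<ge> 1" using n by simp
      hence "cmod a / real n \<le> cmod a" by (simp add: divide_le_eq mult_le_cancel_left1 mult_le_cancel_left2)
      thus "cmod a / real n \<le> B" using aB by linarith
    qed
    have e: "cmod (exp z - 1) \<le> C / real n"
    proof -
      have "cmod (exp z - 1) \<le> exp (cmod z) * cmod z" by (rule norm_exp_sub1)
      also have "\<dots> \<le> exp B * (cmod a / real n)" unfolding nz[symmetric]
        using zB by (intro mult_mono) (auto simp: nz)
      also have "\<dots> \<le> exp B * (B / real n)"
        using aB n by (intro mult_left_mono divide_right_mono) auto
      also have "\<dots> \<le> C / real n" unfolding C_def using n
        by (simp add: divide_right_mono mult.commute)
      finally show ?thesis .
    qed
    define t where "t = (\<lambda>k. real (n choose k) * pochhammer (1 + cmod y) k / pochhammer c k * (C / real n) ^ k)"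
    have t0: "\<And>k. t k \<ge> 0" unfolding t_def using py pc C0
      by (intro mult_nonneg_nonneg divide_nonneg_pos) auto
    have "cmod (hyp2F1_neg m (1 + y) (complex_of_real c) (1 - exp z))
       \<le> (\<Sum>k\<le>m. cmod (of_nat (m choose k) * pochhammer (1 + y) k / pochhammer (complex_of_real c) k * (- (1 - exp z)) ^ k))"
      unfolding hyp2F1_neg_def by (rule norm_sum)
    also have "\<dots> \<le> (\<Sum>k\<le>m. t k)"
    proof (rule sum_mono)
      fix k assume "k \<in> {..m}"
      have eq: "cmod (of_nat (m choose k) * pochhammer (1 + y) k / pochhammer (complex_of_real c) k * (- (1 - exp z)) ^ k)
         = real (m choose k) * cmod (pochhammer (1 + y) k) / pochhammer c k * cmod (exp z - 1) ^ k"
        using pc[of k] by (simp add: pochhammer_of_real norm_mult norm_divide norm_power norm_minus_commute)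
      show "cmod (of_nat (m choose k) * pochhammer (1 + y) k / pochhammer (complex_of_real c) k * (- (1 - exp z)) ^ k) \<le> t k"
        unfolding eq t_def
      proof (intro mult_mono divide_right_mono power_mono)
        show "real (m choose k) \<le> real (n choose k)" using binomial_right_mono[OF mn] by simp
        show "cmod (pochhammer (1 + y) k) \<le> pochhammer (1 + cmod y) k" by (rule norm_poch_le)
        show "cmod (exp z - 1) \<le> C / real n" by (rule e)
      qed (use pc[of k] py[of k] in \<open>auto intro!: divide_nonneg_pos mult_nonneg_nonneg\<close>)
    qed
    also have "\<dots> \<le> (\<Sum>k\<le>n. t k)" using mn t0 by (intro sum_mono2) auto
    also have "\<dots> = hyp2F1_neg n (1 + cmod y) c (- C / real n)"
      unfolding hyp2F1_neg_def t_def by simp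
    finally show "cmod (hyp2F1_neg m (1 + Complex \<gamma> \<tau>) (complex_of_real (2 * \<gamma> + 1))
                   (1 - exp (\<i> * a / of_nat n)))
           \<le> hyp2F1_neg n (1 + cmod (Complex \<gamma> \<tau>)) (2 * \<gamma> + 1) (- C / real n)"
      by (simp add: y_def c_def z_def)
  qed
qed

end
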